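(* Let $P_2$ have vertices $u,v$ and $P_3$ have vertices $1,2,3$ (with $2$ the middle vertex). Then the Cartesian product $P_2\square P_3$ has pretty good state transfer both between $(u,1)$ and $(u,3)$ and between $(u,1)$ and $(v,1)$, although $(u,3)\neq(v,1)$.
   Context: $P_m$ denotes the path on $m$ vertices. The transition matrix of a graph with adjacency matrix $A$ is $H(t)=\exp(-itA)$. The Cartesian product $G_1\square G_2$ has vertex set $V(G_1)\times V(G_2)$, with $(u_1,u_2)\sim(v_1,v_2)$ iff either $u_1\sim v_1$ and $u_2=v_2$, or $u_1=v_1$ and $u_2\sim v_2$. A graph has pretty good state transfer between vertices $x$ and $y$ if for every $\epsilon>0$ there is $t\in\mathbb R$ with $\big||e_x^TH(t)e_y|-1\big|<\epsilon$. *)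

theory Defs
  imports Complex_Main
begin

type_synonym 'a graph = "'a set \<times> ('a \<Rightarrow> 'a \<Rightarrow> bool)"

definition verts :: "'a graph \<Rightarrow> 'a set" where "verts G = fst G"
definition adj :: "'a graph \<Rightarrow> 'a \<Rightarrow> 'a \<Rightarrow> bool" where
  "adj G x y = (x \<in> verts G \<and> y \<in> verts G \<and> snd G x y)"

definition path_graph :: "nat \<Rightarrow> nat graph" where
  "path_graph m = ({1..m}, (\<lambda>i j. i = j + 1 \<or> j = i + 1))"

definition cart_prod :: "'a graph \<Rightarrow> 'b graph \<Rightarrow> ('a \<times> 'b) graph" where
  "cart_prod G1 G2 = (verts G1 \<times> verts G2,
     (\<lambda>(u1, u2) (v1, v2). (adj G1 u1 v1 \<and> u2 = v2) \<or> (u1 = v1 \<and> adj G2 u2 v2)))"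

definition adj_matrix :: "'a graph \<Rightarrow> 'a \<Rightarrow> 'a \<Rightarrow> complex" where
  "adj_matrix G x y = (if adj G x y then 1 else 0)"

fun mat_pow :: "'a set \<Rightarrow> ('a \<Rightarrow> 'a \<Rightarrow> complex) \<Rightarrow> nat \<Rightarrow> 'a \<Rightarrow> 'a \<Rightarrow> complex" where
  "mat_pow V M 0 = (\<lambda>x y. if x = y then 1 else 0)"
| "mat_pow V M (Suc k) = (\<lambda>x y. \<Sum>z\<in>V. M x z * mat_pow V M k z y)"

definition transition :: "'a graph \<Rightarrow> real \<Rightarrow> 'a \<Rightarrow> 'a \<Rightarrow> complex" where
  "transition G t x y =
     (\<Sum>k. ((- \<i> * complex_of_real t) ^ k / of_nat (fact k)) * mat_pow (verts G) (adj_matrix G) k x y)"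

definition pgst :: "'a graph \<Rightarrow> 'a \<Rightarrow> 'a \<Rightarrow> bool" where
  "pgst G x y = (\<forall>\<epsilon>>0. \<exists>t::real. \<bar>cmod (transition G t x y) - 1\<bar> < \<epsilon>)"

end

theory Submission
  imports Defs
begin


fun pa :: "nat \<Rightarrow> nat \<times> nat" where
  "pa 0 = (1, 1)"
| "pa (Suc n) = (case pa n of (m, k) \<Rightarrow> (m + 2*k, m + k))"

lemma pa_inv: "pa n = (m, k) \<Longrightarrow> odd m \<and> m \<ge> n + 1 \<and> k \<ge> 1 \<and> (m^2 + 1 = 2*k^2 \<or> m^2 = 2*k^2 + 1)"
proof (induction n arbitrary: m k)
  case 0 then show ?case by auto
next
  case (Suc n)
  obtain m0 k0 where p: "pa n = (m0, k0)" by (cases "pa n")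
  with Suc.prems have mk: "m = m0 + 2*k0" "k = m0 + k0" by auto
  from Suc.IH[OF p] have ih: "odd m0" "m0 \<ge> n+1" "k0 \<ge> 1" "m0^2 + 1 = 2*k0^2 \<or> m0^2 = 2*k0^2 + 1" by auto
  have "m^2 + 1 = 2*k^2 \<or> m^2 = 2*k^2 + 1"
    using ih(4) unfolding mk by (auto simp: power2_eq_square algebra_simps)
  then show ?case using ih(1-3) mk by auto
qed

fun pb :: "nat \<Rightarrow> nat \<times> nat" where
  "pb 0 = (3, 1)"
| "pb (Suc n) = (case pb n of (x, y) \<Rightarrow> (3*x + 8*y, x + 3*y))"

lemma pb_inv: "pb n = (x, y) \<Longrightarrow> odd x \<and> x \<ge> n + 1 \<and> x^2 = 8*y^2 + 1"
proof (induction n arbitrary: x y)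
  case 0 then show ?case by auto
next
  case (Suc n)
  obtain x0 y0 where p: "pb n = (x0, y0)" by (cases "pb n")
  with Suc.prems have mk: "x = 3*x0 + 8*y0" "y = x0 + 3*y0" by auto
  from Suc.IH[OF p] have ih: "odd x0" "x0 \<ge> n+1" "x0^2 = 8*y0^2 + 1" by auto
  have "x^2 = 8*y^2 + 1"
    using ih(3) unfolding mk by (auto simp: power2_eq_square algebra_simps)
  then show ?case using ih(1-2) mk by auto
qed

lemma bound1:
  fixes m k :: nat
  assumes "m > 0" "m^2 + 1 = 2*k^2 \<or> m^2 = 2*k^2 + 1"
  shows "\<bar>sqrt 2 * k - m\<bar> \<le> 1 / m"
proof -
  have r: "real m ^ 2 + 1 = 2 * real k ^ 2 \<or> real m ^ 2 = 2 * real k ^ 2 + 1"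
  proof (cases "m^2 + 1 = 2*k^2")
    case True
    then have "real (m^2 + 1) = real (2*k^2)" by (simp only:)
    then show ?thesis by simp
  next
    case False
    then have "m^2 = 2*k^2+1" using assms(2) by simp
    then have "real (m^2) = real (2*k^2+1)" by (simp only:)
    then show ?thesis by simp
  qed
  have e: "(sqrt 2 * k - m) * (sqrt 2 * k + m) = 2 * real k ^ 2 - real m ^ 2"
    by (simp add: algebra_simps power2_eq_square)
  have "\<bar>sqrt 2 * k - m\<bar> * (sqrt 2 * k + m) = 1"
  proof -
    have "\<bar>sqrt 2 * k - m\<bar> * (sqrt 2 * k + m) = \<bar>(sqrt 2 * k - m) * (sqrt 2 * k + m)\<bar>"
      by (simp add: abs_mult)
    also have "\<dots> = 1" using e r by auto
    finally show ?thesis .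
  qed
  moreover have S1: "sqrt 2 * k + m \<ge> m" by simp
  moreover have m0: "real m > 0" using assms by simp
  moreover have Sp: "sqrt 2 * k + m > 0" using S1 m0 by linarith
  ultimately have "\<bar>sqrt 2 * k - m\<bar> = 1 / (sqrt 2 * k + m)"
    by (simp add: eq_divide_eq)
  also have "\<dots> \<le> 1 / m"
    apply (rule divide_left_mono) using S1 m0 Sp by (auto intro!: mult_pos_pos)
  finally show ?thesis .
qed

lemma bound2:
  fixes x y :: nat
  assumes "x > 0" "x^2 = 8*y^2 + 1"
  shows "\<bar>sqrt 2 * x - 4 * y\<bar> \<le> 2 / x"
proof -
  have r: "real x ^ 2 = 8 * real y ^ 2 + 1"
    using assms(2) by (metis of_nat_1 of_nat_add of_nat_mult of_nat_numeral of_nat_power)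
  have e: "(sqrt 2 * x - 4 * y) * (sqrt 2 * x + 4 * y) = 2 * real x ^ 2 - 16 * real y ^ 2"
    by (simp add: algebra_simps power2_eq_square)
  have p: "\<bar>sqrt 2 * x - 4 * y\<bar> * (sqrt 2 * x + 4 * y) = 2"
  proof -
    have "\<bar>sqrt 2 * x - 4 * y\<bar> * (sqrt 2 * x + 4 * y) = \<bar>(sqrt 2 * x - 4 * y) * (sqrt 2 * x + 4 * y)\<bar>"
      by (simp add: abs_mult)
    also have "\<dots> = 2" using e r by auto
    finally show ?thesis .
  qed
  have s: "sqrt 2 \<ge> 1" by simp
  have "1 * real x \<le> sqrt 2 * x" using mult_right_mono[OF s, of "real x"] by simp
  then have S1: "sqrt 2 * x + 4 * y \<ge> x" by simp
  have m0: "real x > 0" using assms by simp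
  have "sqrt 2 * x + 4 * y > 0" using S1 m0 by linarith
  then have "\<bar>sqrt 2 * x - 4 * y\<bar> = 2 / (sqrt 2 * x + 4 * y)" using p
    by (simp add: eq_divide_eq)
  also have "\<dots> \<le> 2 / x"
    apply (rule divide_left_mono) using S1 m0 by (auto intro!: mult_pos_pos)
  finally show ?thesis .
qed

lemma cos_near: "(\<epsilon>::real) > 0 \<Longrightarrow> \<exists>\<delta>>0. \<forall>z::real. \<bar>z\<bar> < \<delta> \<longrightarrow> \<bar>cos z - 1\<bar> < \<epsilon>"
proof -
  assume "\<epsilon> > 0"
  have "(cos :: real \<Rightarrow> real) \<midarrow>0\<rightarrow> cos 0" using isCont_cos[of "0::real"] by (simp only: isCont_def)
  from LIM_D[OF this \<open>\<epsilon> > 0\<close>] obtain s where s: "s > 0" "\<forall>x::real. x \<noteq> 0 \<and> norm (x - 0) < s \<longrightarrow> norm (cos x - cos 0) < \<epsilon>" by blast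
  show ?thesis
  proof (intro exI[of _ s] conjI allI impI)
    fix z :: real assume z: "\<bar>z\<bar> < s"
    show "\<bar>cos z - 1\<bar> < \<epsilon>"
    proof (cases "z = 0")
      case True then show ?thesis using \<open>\<epsilon> > 0\<close> by simp
    next
      case False then show ?thesis using s z by auto
    qed
  qed fact
qed

lemma close13: "\<epsilon> > 0 \<Longrightarrow> \<exists>t. \<bar>\<bar>cos t * (cos (sqrt 2 * t) - 1) / 2\<bar> - 1\<bar> < \<epsilon>"
proof -
  assume "\<epsilon> > 0"
  then obtain \<delta> where d: "\<delta> > 0" "\<And>z. \<bar>z\<bar> < \<delta> \<Longrightarrow> \<bar>cos z - 1\<bar> < \<epsilon>" using cos_near by blast
  obtain N :: nat where N: "pi / \<delta> < N" using reals_Archimedean2 by blast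
  obtain m k where p: "pa N = (m, k)" by (cases "pa N")
  from pa_inv[OF p] have inv: "odd m" "m \<ge> N + 1" "m^2 + 1 = 2*k^2 \<or> m^2 = 2*k^2 + 1" by auto
  define d' where "d' = sqrt 2 * k - m"
  have bd: "\<bar>d'\<bar> \<le> 1 / m" using bound1[of m k] inv unfolding d'_def by auto
  have mpos: "real m > 0" using inv by simp
  have "pi / m < \<delta>"
  proof -
    have "pi / \<delta> < m" using N inv(2) by linarith
    then show ?thesis using d(1) mpos by (simp add: field_simps)
  qed
  moreover have "\<bar>pi * d'\<bar> \<le> pi / m"
  proof -
    have "\<bar>pi * d'\<bar> = pi * \<bar>d'\<bar>" by (simp add: abs_mult)
    also have "\<dots> \<le> pi * (1 / m)" by (rule mult_left_mono[OF bd]) simp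
    finally show ?thesis by simp
  qed
  ultimately have small: "\<bar>pi * d'\<bar> < \<delta>" by linarith
  have c1: "\<bar>cos (pi * d') - 1\<bar> < \<epsilon>" using d(2)[OF small] .
  define t where "t = real k * pi"
  have ct: "\<bar>cos t\<bar> = 1" unfolding t_def by (simp add: power_abs)
  have "sqrt 2 * t = real m * pi + pi * d'" unfolding t_def d'_def by (simp add: algebra_simps)
  then have cs: "cos (sqrt 2 * t) = - cos (pi * d')"
    using inv(1) by (simp add: cos_add)
  have "\<bar>cos t * (cos (sqrt 2 * t) - 1) / 2\<bar> = (1 + cos (pi * d')) / 2"
    using ct cs by (simp add: abs_mult abs_divide)
  then show ?thesis using c1 \<open>\<epsilon> > 0\<close> by (intro exI[of _ t]) auto
qed

lemma close21: "\<epsilon> > 0 \<Longrightarrow> \<exists>t. \<bar>\<bar>sin t * (cos (sqrt 2 * t) + 1) / 2\<bar> - 1\<bar> < \<epsilon>"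
proof -
  assume "\<epsilon> > 0"
  then obtain \<delta> where d: "\<delta> > 0" "\<And>z. \<bar>z\<bar> < \<delta> \<Longrightarrow> \<bar>cos z - 1\<bar> < \<epsilon>" using cos_near by blast
  obtain N :: nat where N: "pi / \<delta> < N" using reals_Archimedean2 by blast
  obtain x y where p: "pb N = (x, y)" by (cases "pb N")
  from pb_inv[OF p] have inv: "odd x" "x \<ge> N + 1" "x^2 = 8*y^2 + 1" by auto
  define d' where "d' = sqrt 2 * x - 4 * y"
  have bd: "\<bar>d'\<bar> \<le> 2 / x" using bound2[of x y] inv unfolding d'_def by auto
  have mpos: "real x > 0" using inv by simp
  have "pi / x < \<delta>"
  proof -
    have "pi / \<delta> < x" using N inv(2) by linarith
    then show ?thesis using d(1) mpos by (simp add: field_simps)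
  qed
  moreover have "\<bar>pi * d' / 2\<bar> \<le> pi / x"
  proof -
    have "\<bar>pi * d' / 2\<bar> = pi * \<bar>d'\<bar> / 2" by (simp add: abs_mult)
    also have "\<dots> \<le> pi * (2 / x) / 2" by (intro divide_right_mono mult_left_mono[OF bd]) simp_all
    finally show ?thesis by simp
  qed
  ultimately have small: "\<bar>pi * d' / 2\<bar> < \<delta>" by linarith
  have c1: "\<bar>cos (pi * d' / 2) - 1\<bar> < \<epsilon>" using d(2)[OF small] .
  obtain j where j: "x = 2*j + 1" using inv(1) oddE by blast
  define t where "t = real x * pi / 2"
  have "t = real j * pi + pi / 2" unfolding t_def j by (simp add: algebra_simps)
  then have st: "\<bar>sin t\<bar> = 1" by (simp add: sin_add power_abs)
  have "sqrt 2 * t = real (2*y) * pi + pi * d' / 2" unfolding t_def d'_def by (simp add: field_simps)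
  then have cs: "cos (sqrt 2 * t) = cos (pi * d' / 2)"
    by (simp add: cos_add)
  have "\<bar>sin t * (cos (sqrt 2 * t) + 1) / 2\<bar> = (1 + cos (pi * d' / 2)) / 2"
  proof -
    have nn: "\<bar>cos (pi * d' / 2) + 1\<bar> = cos (pi * d' / 2) + 1"
      using cos_ge_minus_one[of "pi * d' / 2"] by (intro abs_of_nonneg) linarith
    show ?thesis using st cs nn by (simp add: abs_mult abs_divide)
  qed
  then show ?thesis using c1 \<open>\<epsilon> > 0\<close> by (intro exI[of _ t]) auto
qed



abbreviation GG :: "(nat\<times>nat) graph" where "GG \<equiv> cart_prod (path_graph 2) (path_graph 3)"
definition VV :: "(nat\<times>nat) set" where "VV = {(1,1),(1,2),(1,3),(2,1),(2,2),(2,3)}"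

lemma verts_GG: "verts GG = VV"
  by (auto simp: VV_def cart_prod_def path_graph_def verts_def)

definition Ar :: "nat\<times>nat \<Rightarrow> nat\<times>nat \<Rightarrow> real" where
  "Ar x z = (if adj GG x z then 1 else 0)"

lemma adjm: "adj_matrix GG x z = of_real (Ar x z)"
  by (simp add: adj_matrix_def Ar_def)

definition p1 :: "nat \<Rightarrow> nat \<Rightarrow> real" where
  "p1 s i = (if s = 0 then 1 else if i = 1 then 1 else -1)"
definition l1 :: "nat \<Rightarrow> real" where "l1 s = (if s = 0 then 1 else -1)"
definition p2 :: "nat \<Rightarrow> nat \<Rightarrow> real" where
  "p2 r j = (if r = 0 then (if j = 1 then 1 else if j = 2 then 0 else -1)
             else if r = 1 then (if j = 2 then sqrt 2 else 1) else (if j = 2 then - sqrt 2 else 1))"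
definition l2 :: "nat \<Rightarrow> real" where "l2 r = (if r = 0 then 0 else if r = 1 then sqrt 2 else - sqrt 2)"
definition n2 :: "nat \<Rightarrow> real" where "n2 r = (if r = 0 then 2 else 4)"

definition EE :: "(nat\<times>nat) set" where "EE = {(0,0),(0,1),(0,2),(1,0),(1,1),(1,2)}"
definition ve :: "nat\<times>nat \<Rightarrow> nat\<times>nat \<Rightarrow> real" where "ve e x = p1 (fst e) (fst x) * p2 (snd e) (snd x)"
definition lam :: "nat\<times>nat \<Rightarrow> real" where "lam e = l1 (fst e) + l2 (snd e)"
definition cc :: "nat\<times>nat \<Rightarrow> real" where "cc e = 1 / (2 * n2 (snd e))"

lemma eig: "x \<in> VV \<Longrightarrow> e \<in> EE \<Longrightarrow> (\<Sum>z\<in>VV. Ar x z * ve e z) = lam e * ve e x"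
  apply (simp only: VV_def EE_def insert_iff empty_iff)
  apply (elim disjE)
  apply (simp_all add: Ar_def adj_def cart_prod_def path_graph_def verts_def ve_def lam_def p1_def p2_def l1_def l2_def algebra_simps)
  done

lemma base: "x \<in> VV \<Longrightarrow> y \<in> VV \<Longrightarrow> (\<Sum>e\<in>EE. cc e * ve e x * ve e y) = (if x = y then 1 else 0)"
  unfolding EE_def VV_def
  apply (simp only: insert_iff empty_iff)
  apply (elim disjE)
  apply (simp_all add: cc_def n2_def ve_def p1_def p2_def)
  done

lemma finEE: "finite EE" by (simp add: EE_def)

lemma mp: "x \<in> VV \<Longrightarrow> y \<in> VV \<Longrightarrow>
  mat_pow VV (adj_matrix GG) k x y = of_real (\<Sum>e\<in>EE. cc e * lam e ^ k * ve e x * ve e y)"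
proof (induction k arbitrary: x)
  case 0
  then show ?case using base[of x y] by simp
next
  case (Suc k)
  have R: "(\<Sum>z\<in>VV. Ar x z * (\<Sum>e\<in>EE. cc e * lam e ^ k * ve e z * ve e y))
     = (\<Sum>e\<in>EE. cc e * lam e ^ k * ve e y * (\<Sum>z\<in>VV. Ar x z * ve e z))"
    apply (simp only: sum_distrib_left)
    apply (subst sum.swap)
    apply (rule sum.cong[OF refl])+
    apply (simp only: mult_ac)
    done
  have "mat_pow VV (adj_matrix GG) (Suc k) x y
      = (\<Sum>z\<in>VV. adj_matrix GG x z * mat_pow VV (adj_matrix GG) k z y)"
    by (simp only: mat_pow.simps)
  also have "\<dots> = (\<Sum>z\<in>VV. of_real (Ar x z) * of_real (\<Sum>e\<in>EE. cc e * lam e ^ k * ve e z * ve e y))"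
    apply (rule sum.cong[OF refl])
    subgoal for z by (simp only: adjm Suc.IH[OF _ Suc.prems(2)])
    done
  also have "\<dots> = of_real (\<Sum>z\<in>VV. Ar x z * (\<Sum>e\<in>EE. cc e * lam e ^ k * ve e z * ve e y))"
    by (simp only: of_real_mult of_real_sum)
  also have "\<dots> = of_real (\<Sum>e\<in>EE. cc e * lam e ^ k * ve e y * (\<Sum>z\<in>VV. Ar x z * ve e z))"
    by (simp only: R)
  also have "\<dots> = of_real (\<Sum>e\<in>EE. cc e * lam e ^ Suc k * ve e x * ve e y)"
    using eig[OF Suc.prems(1)] by (intro arg_cong[where f=of_real] sum.cong refl) (simp add: mult_ac)
  finally show ?case .
qed

lemma expser: "(\<lambda>k. z ^ k / of_nat (fact k)) sums exp (z::complex)"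
proof -
  have "(\<lambda>k. z ^ k /\<^sub>R fact k) sums exp z" by (rule exp_converges)
  moreover have "\<And>k. z ^ k /\<^sub>R fact k = z ^ k / of_nat (fact k)"
    by (simp add: scaleR_conv_of_real divide_inverse mult_ac)
  ultimately show ?thesis by simp
qed

lemma trans_formula: "x \<in> VV \<Longrightarrow> y \<in> VV \<Longrightarrow>
  transition GG t x y = (\<Sum>e\<in>EE. of_real (cc e * ve e x * ve e y) * exp (- \<i> * of_real t * of_real (lam e)))"
proof -
  assume x: "x \<in> VV" and y: "y \<in> VV"
  let ?a = "\<lambda>e. of_real (cc e * ve e x * ve e y) :: complex"
  let ?z = "\<lambda>e. - \<i> * of_real t * of_real (lam e) :: complex"
  have "transition GG t x y = (\<Sum>k. \<Sum>e\<in>EE. ?a e * (?z e ^ k / of_nat (fact k)))"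
    unfolding transition_def verts_GG
    apply (simp only: mp[OF x y])
    apply (rule arg_cong[where f=suminf])
    apply (rule ext)
    apply (simp only: of_real_sum sum_distrib_left)
    apply (rule sum.cong[OF refl])
    apply (simp only: power_mult_distrib[of "- \<i> * of_real t"] of_real_mult of_real_power)
    apply (simp only: divide_inverse mult_ac)
    done
  also have "\<dots> = (\<Sum>e\<in>EE. \<Sum>k. ?a e * (?z e ^ k / of_nat (fact k)))"
    by (rule suminf_sum) (intro summable_mult sums_summable[OF expser])
  also have "\<dots> = (\<Sum>e\<in>EE. ?a e * exp (?z e))"
    apply (rule sum.cong[OF refl])
    apply (subst suminf_mult[OF sums_summable[OF expser]])
    apply (subst sums_unique[OF expser, symmetric])
    apply (rule refl)
    done
  finally show ?thesis .
qed

lemma expc: "exp (- \<i> * complex_of_real t * complex_of_real a) = Complex (cos (t*a)) (- sin (t*a))"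
proof -
  have "exp (- \<i> * complex_of_real t * complex_of_real a) = cis (- (t*a))"
    by (simp add: cis_conv_exp mult.assoc)
  then show ?thesis by (simp add: complex_eq_iff)
qed

lemma T13: "transition GG t (1,1) (1,3) = of_real (cos t * (cos (sqrt 2 * t) - 1) / 2)"
  apply (subst trans_formula, simp add: VV_def, simp add: VV_def)
  apply (simp only: expc)
  apply (simp add: EE_def cc_def n2_def ve_def p1_def p2_def lam_def l1_def l2_def expc)
  apply (simp add: complex_eq_iff distrib_left cos_add sin_add cos_diff sin_diff algebra_simps)
  apply (simp add: divide_simps)
  done

lemma T21: "transition GG t (1,1) (2,1) = - \<i> * of_real (sin t * (cos (sqrt 2 * t) + 1) / 2)"
  apply (subst trans_formula, simp add: VV_def, simp add: VV_def)
  apply (simp only: expc)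
  apply (simp add: EE_def cc_def n2_def ve_def p1_def p2_def lam_def l1_def l2_def expc)
  apply (simp add: complex_eq_iff distrib_left cos_add sin_add cos_diff sin_diff algebra_simps)
  apply (simp add: divide_simps)
  done

theorem mainTheorem6:
  fixes u v :: nat
  assumes "u = 1" and "v = 2"
  shows "pgst (cart_prod (path_graph 2) (path_graph 3)) (u, 1) (u, 3)
       \<and> pgst (cart_prod (path_graph 2) (path_graph 3)) (u, 1) (v, 1)
       \<and> (u, 3::nat) \<noteq> (v, 1)"
proof -
  have A: "pgst GG (1,1) (1,3)"
    unfolding pgst_def
  proof (intro allI impI)
    fix \<epsilon> :: real assume "\<epsilon> > 0"
    then obtain t where "\<bar>\<bar>cos t * (cos (sqrt 2 * t) - 1) / 2\<bar> - 1\<bar> < \<epsilon>" using close13 by blast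
    then show "\<exists>t. \<bar>cmod (transition GG t (1,1) (1,3)) - 1\<bar> < \<epsilon>"
      by (intro exI[of _ t]) (simp only: T13 norm_of_real)
  qed
  have B: "pgst GG (1,1) (2,1)"
    unfolding pgst_def
  proof (intro allI impI)
    fix \<epsilon> :: real assume "\<epsilon> > 0"
    then obtain t where "\<bar>\<bar>sin t * (cos (sqrt 2 * t) + 1) / 2\<bar> - 1\<bar> < \<epsilon>" using close21 by blast
    moreover have "cmod (transition GG t (1,1) (2,1)) = \<bar>sin t * (cos (sqrt 2 * t) + 1) / 2\<bar>"
      by (simp only: T21 norm_mult norm_minus_cancel norm_ii norm_of_real mult_1_left)
    ultimately show "\<exists>t. \<bar>cmod (transition GG t (1,1) (2,1)) - 1\<bar> < \<epsilon>"
      by (intro exI[of _ t]) simp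
  qed
  show ?thesis using A B assms by simp
qed

end
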